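(* Let $I=[a,b]$ be an interval with $|I|<1$, $\gamma>1$, and let $\mathcal{K}:I\to\mathbb{R}$ be continuous and such that there is $C_0>0$ with $|\mathcal{K}(\xi+\tau)+\mathcal{K}(\xi-\tau)-2\mathcal{K}(\xi)|\le C_0\tau\mathcal{Z}_\gamma(\tau)$ for all $\tau\in[0,|I|/2]$ and all $\xi$ with $\xi\pm\tau\in I$. Then $\mathcal{K}\in C^1(I)$, and there exists a constant $C>0$ such that for all $\xi,\eta\in I$, $$|\mathcal{K}'(\xi)-\mathcal{K}'(\eta)|\le C\,\mathcal{P}_\gamma(|\xi-\eta|).$$
   Context: $\mathcal{Z}_\gamma(x)=(\log\frac1x)^{-\gamma}$ for $x\in(0,1)$ and $\mathcal{Z}_\gamma(0)=0$. For $\gamma>1$, $\mathcal{P}_\gamma:(0,1)\to\mathbb{R}$ is $\mathcal{P}_\gamma(x)=\sum_{n=1}^\infty \mathcal{Z}_\gamma(x2^{-n})$, extended by $\mathcal{P}_\gamma(0)=0$. *)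

theory Defs
  imports "HOL-Analysis.Analysis"
begin

definition Zg :: "real \<Rightarrow> real \<Rightarrow> real" where
  "Zg \<gamma> x = (if x = 0 then 0 else (ln (1 / x)) powr (- \<gamma>))"

definition Pg :: "real \<Rightarrow> real \<Rightarrow> real" where
  "Pg \<gamma> x = (if x = 0 then 0 else (\<Sum>n. Zg \<gamma> (x / 2 ^ (Suc n))))"

end

theory Submission
  imports Defs
begin

lemma div_pow2_lim: "(\<lambda>n. (h::real) / 2^n) \<longlonglongrightarrow> 0"
proof -
  have "(\<lambda>n. h * inverse ((2::real) ^ n)) \<longlonglongrightarrow> h * 0"
    by (intro tendsto_intros LIMSEQ_inverse_realpow_zero) simp
  then show ?thesis by (simp add: field_simps)
qed
lemma lnc_lim: "((\<lambda>x::real. ln (c/x) powr (-g)) \<longlongrightarrow> 0) (at_right 0)" if "g > 1" "c > 0"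
proof (rule tendsto_neg_powr)
  show "-g < 0" using that by simp
  have "filterlim (\<lambda>x. ln c + (- ln x)) at_top (at_right (0::real))"
    by (rule filterlim_tendsto_add_at_top[OF tendsto_const])
       (simp add: filterlim_uminus_at_top ln_at_0)
  then show "filterlim (\<lambda>x. ln (c/x)) at_top (at_right (0::real))"
    by (rule filterlim_cong[THEN iffD1, rotated 3])
       (use that in \<open>auto simp: eventually_at_right_field ln_div intro!: exI[of _ 1]\<close>)
qed


lemma Zg_nonneg: "Zg g x \<ge> 0"
  by (simp add: Zg_def)

lemma Zg_bound:
  assumes "g > 0" "0 \<le> h" "h < 1"
  shows "Zg g (h / 2 ^ Suc n) \<le> (real (Suc n) * ln 2) powr (-g)"
proof (cases "h = 0")
  case True then show ?thesis by (simp add: Zg_def)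
next
  case False
  then have hp: "h > 0" using assms by simp
  have "ln (1 / (h / 2 ^ Suc n)) = ln (2 ^ Suc n) + ln (1/h)"
    using hp by (simp add: ln_div ln_mult)
  also have "ln (2 ^ Suc n) = real (Suc n) * ln 2" by (metis ln_realpow zero_less_numeral)
  finally have e: "ln (1 / (h / 2 ^ Suc n)) = real (Suc n) * ln 2 + ln (1/h)" .
  have "ln (1/h) \<ge> 0" using hp assms by simp
  then have "real (Suc n) * ln 2 \<le> ln (1 / (h / 2 ^ Suc n))" using e by simp
  moreover have "0 < real (Suc n) * ln 2" by simp
  ultimately have "ln (1 / (h / 2 ^ Suc n)) powr (-g) \<le> (real (Suc n) * ln 2) powr (-g)"
    using assms by (intro powr_mono2') auto
  then show ?thesis using hp by (simp add: Zg_def)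
qed

lemma M_summable:
  assumes "g > 1"
  shows "summable (\<lambda>n. (real (Suc n) * ln 2) powr (-g))"
proof -
  have "summable (\<lambda>n. real n powr (-g))" using assms by (simp add: summable_real_powr_iff)
  then have "summable (\<lambda>n. real (Suc n) powr (-g))"
    using summable_Suc_iff[of "\<lambda>n. real n powr (-g)"] by simp
  then have "summable (\<lambda>n. ln 2 powr (-g) * real (Suc n) powr (-g))"
    by (rule summable_mult)
  then show ?thesis by (simp add: powr_mult mult.commute)
qed

lemma Zg_summable:
  assumes "g > 1" "0 \<le> h" "h < 1"
  shows "summable (\<lambda>n. Zg g (h / 2 ^ Suc n))"
  by (rule summable_comparison_test'[OF M_summable[OF assms(1)]])
     (use Zg_bound[of g h] assms Zg_nonneg in auto)

lemma Pg_nonneg: "Pg g h \<ge> 0" if "g > 1" "0 \<le> h" "h < 1"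
  unfolding Pg_def using Zg_summable[OF that] Zg_nonneg by (auto intro: suminf_nonneg)

lemma Pg_partial:
  assumes "g > 1" "0 < h" "h < 1"
  shows "(\<Sum>k<n. Zg g (h / 2 ^ Suc k)) \<le> Pg g h"
  unfolding Pg_def using assms Zg_summable[of g h] Zg_nonneg
  by (auto intro!: sum_le_suminf)

lemma Pg_lim:
  assumes "g > 1"
  shows "(Pg g \<longlongrightarrow> 0) (at 0 within {0<..<1})"
proof -
  let ?f = "\<lambda>N h. \<Sum>i<N. Zg g (h / 2 ^ Suc i)"
  have ul: "uniform_limit {0<..<1} ?f (\<lambda>h. \<Sum>i. Zg g (h / 2 ^ Suc i)) sequentially"
    by (rule Weierstrass_m_test[OF _ M_summable[OF assms]])
       (use Zg_bound[of g] assms Zg_nonneg in auto)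
  have trm: "((\<lambda>h. Zg g (h / 2 ^ Suc i)) \<longlongrightarrow> 0) (at 0 within {0<..<1})" for i
  proof -
    have c: "(0::real) < 2 ^ Suc i" by simp
    have "((\<lambda>x::real. ln (2 ^ Suc i / x) powr (-g)) \<longlongrightarrow> 0) (at_right 0)"
      by (rule lnc_lim) (use assms c in auto)
    then have "((\<lambda>h. Zg g (h / 2 ^ Suc i)) \<longlongrightarrow> 0) (at_right 0)"
      by (rule tendsto_cong[THEN iffD1, rotated])
         (auto simp: eventually_at_right_field Zg_def intro!: exI[of _ 1])
    then show ?thesis by (rule tendsto_within_subset) auto
  qed
  have "((\<lambda>h. \<Sum>i. Zg g (h / 2 ^ Suc i)) \<longlongrightarrow> 0) (at 0 within {0<..<1})"
    by (rule swap_uniform_limit[OF _ _ ul]) (auto intro!: always_eventually allI tendsto_null_sum trm simp del: power_Suc)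
  then show ?thesis
    by (rule tendsto_cong[THEN iffD1, rotated])
       (auto simp: eventually_at_filter Pg_def)
qed

lemma Pg_small:
  assumes "g > 1" "e > 0"
  shows "\<exists>d>0. d \<le> 1 \<and> (\<forall>h. 0 < h \<and> h < d \<longrightarrow> Pg g h < e)"
proof -
  from Pg_lim[OF assms(1)] assms(2) obtain d where d: "d > 0"
    "\<And>h. h \<in> {0<..<1} \<Longrightarrow> 0 < dist h 0 \<Longrightarrow> dist h 0 < d \<Longrightarrow> dist (Pg g h) 0 < e"
    unfolding Lim_within by metis
  show ?thesis
    by (rule exI[of _ "min d 1"]) (use d Pg_nonneg[OF assms(1)] in fastforce)
qed



lemma tri3: "\<bar>(A::real) - C\<bar> \<le> \<bar>A - B\<bar> + \<bar>B - C\<bar>" by arith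

lemma tele:
  fixes K :: "real \<Rightarrow> real"
  assumes H: "\<And>\<xi> \<tau>. 0 \<le> \<tau> \<Longrightarrow> \<tau> \<le> (b-a)/2 \<Longrightarrow> \<xi>-\<tau> \<in> {a..b} \<Longrightarrow> \<xi>+\<tau> \<in> {a..b} \<Longrightarrow>
        \<bar>K (\<xi>+\<tau>) + K (\<xi>-\<tau>) - 2 * K \<xi>\<bar> \<le> C0 * \<tau> * Zg g \<tau>"
    and x: "x \<in> {a..b}" "x + h \<in> {a..b}" and h: "h \<noteq> 0"
  shows "\<bar>(K (x + h/2^n) - K x)/(h/2^n) - (K (x+h) - K x)/h\<bar>
           \<le> C0/2 * (\<Sum>k<n. Zg g (\<bar>h\<bar>/2^Suc k))"
proof (induction n)
  case 0 then show ?case by simp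
next
  case (Suc n)
  define t where "t = h / 2^Suc n"
  have t2: "h/2^n = 2*t" unfolding t_def by simp
  have tn0: "t \<noteq> 0" using h unfolding t_def by simp
  have abst: "\<bar>t\<bar> = \<bar>h\<bar>/2^Suc n" unfolding t_def by (simp add: abs_divide)
  have hl: "\<bar>h\<bar> \<le> b - a" using x by auto
  have "\<bar>h\<bar>/2^Suc n \<le> \<bar>h\<bar>/2" by (rule divide_left_mono) (auto simp: power_Suc)
  moreover have "\<bar>h\<bar>/2 \<le> (b-a)/2" using hl by simp
  ultimately have tle: "\<bar>t\<bar> \<le> (b-a)/2" using abst by linarith
  have "\<bar>h\<bar>/2^n \<le> \<bar>h\<bar>/1" by (rule divide_left_mono) auto
  moreover have "\<bar>2*t\<bar> = \<bar>h\<bar>/2^n" using t2[symmetric] by (simp add: abs_divide)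
  ultimately have tt: "\<bar>2*t\<bar> \<le> \<bar>h\<bar>" by simp
  have tp: "h > 0 \<Longrightarrow> t > 0" "h < 0 \<Longrightarrow> t < 0" unfolding t_def
    by (auto simp: divide_pos_pos divide_neg_pos)
  have xa: "a \<le> x" "x \<le> b" "a \<le> x + h" "x + h \<le> b" using x by auto
  have x2: "x + 2*t \<in> {a..b}"
  proof (cases "h > 0")
    case True
    then have "t > 0" by (rule tp)
    with True tt have "0 \<le> 2*t" "2*t \<le> h" by auto
    with xa show ?thesis by simp
  next
    case False
    then have "h < 0" using h by simp
    then have "t < 0" by (rule tp)
    with \<open>h < 0\<close> tt have "2*t \<le> 0" "h \<le> 2*t" by auto
    with xa show ?thesis by simp
  qed
  have D: "\<bar>K (x+2*t) + K x - 2 * K (x+t)\<bar> \<le> C0 * \<bar>t\<bar> * Zg g \<bar>t\<bar>"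
  proof (cases "t \<ge> 0")
    case True
    have e1: "x+t+t = x+2*t" "x+t-t = x" by simp_all
    have at: "\<bar>t\<bar> = t" using True by simp
    have "\<bar>K (x+t+t) + K (x+t-t) - 2 * K (x+t)\<bar> \<le> C0 * t * Zg g t"
      by (rule H) (use True tle x x2 e1 at in auto)
    then show ?thesis unfolding e1 at .
  next
    case False
    have e1: "x+t+ -t = x" "x+t- -t = x+2*t" by simp_all
    have at: "\<bar>t\<bar> = -t" using False by simp
    have "\<bar>K (x+t+ -t) + K (x+t- -t) - 2 * K (x+t)\<bar> \<le> C0 * (-t) * Zg g (-t)"
      by (rule H) (use False tle x x2 e1 at in auto)
    then show ?thesis unfolding e1 at by (simp only: add.commute)
  qed
  have eq: "(K (x + t) - K x)/t - (K (x + 2*t) - K x)/(2*t)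
       = - (K (x+2*t) + K x - 2 * K (x+t)) / (2*t)"
    using tn0 by (simp add: field_simps)
  have "\<bar>(K (x + t) - K x)/t - (K (x + 2*t) - K x)/(2*t)\<bar>
       = \<bar>K (x+2*t) + K x - 2 * K (x+t)\<bar> / (2*\<bar>t\<bar>)"
    unfolding eq abs_divide abs_minus_cancel abs_mult by simp
  also have "\<dots> \<le> C0 * \<bar>t\<bar> * Zg g \<bar>t\<bar> / (2*\<bar>t\<bar>)"
    using D tn0 by (intro divide_right_mono) auto
  also have "\<dots> = C0/2 * Zg g \<bar>t\<bar>" using tn0 by simp
  finally have step: "\<bar>(K (x + t) - K x)/t - (K (x + 2*t) - K x)/(2*t)\<bar> \<le> C0/2 * Zg g \<bar>t\<bar>" .
  have "\<bar>(K (x + h/2^Suc n) - K x)/(h/2^Suc n) - (K (x+h) - K x)/h\<bar>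
      \<le> \<bar>(K (x + t) - K x)/t - (K (x + 2*t) - K x)/(2*t)\<bar>
        + \<bar>(K (x + h/2^n) - K x)/(h/2^n) - (K (x+h) - K x)/h\<bar>"
    unfolding t2 t_def[symmetric] by (rule tri3)
  also have "\<dots> \<le> C0/2 * Zg g \<bar>t\<bar> + C0/2 * (\<Sum>k<n. Zg g (\<bar>h\<bar>/2^Suc k))"
    using step Suc.IH by linarith
  also have "\<dots> = C0/2 * (\<Sum>k<Suc n. Zg g (\<bar>h\<bar>/2^Suc k))"
    using abst by (simp add: algebra_simps)
  finally show ?case .
qed



lemma riemann:
  fixes K :: "real \<Rightarrow> real"
  assumes cont: "continuous_on {x..y} K" and xy: "x \<le> y" and dp: "\<delta> > 0"
    and e: "e \<longlonglongrightarrow> 0"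
    and bnd: "\<And>n u. u \<in> {x..y} \<Longrightarrow> \<bar>(K (u + \<delta>/2^n) - K u)/(\<delta>/2^n) - g\<bar> \<le> e n + \<epsilon>"
  shows "\<bar>K y - K x - (y-x)*g\<bar> \<le> (y-x)*\<epsilon>"
proof -
  define t where "t n = \<delta>/2^n" for n :: nat
  define m where "m n = nat \<lfloor>(y-x)/t n\<rfloor>" for n
  define z where "z n = x + real (m n) * t n" for n
  have tp: "t n > 0" for n unfolding t_def using dp by simp
  have r0: "(y-x)/t n \<ge> 0" for n using tp[of n] xy by simp
  have m1: "real (m n) \<le> (y-x)/t n" for n
    unfolding m_def using r0[of n] by (simp add: of_nat_nat)
  have m2: "(y-x)/t n < real (m n) + 1" for n
    unfolding m_def using r0[of n] by (simp add: of_nat_nat)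
  have mt1: "real (m n) * t n \<le> y - x" for n
    using m1[of n] tp[of n] by (simp add: le_divide_eq)
  have mt2: "y - x < real (m n) * t n + t n" for n
    using m2[of n] tp[of n] by (simp add: divide_less_eq algebra_simps)
  have zin: "z n \<in> {x..y}" for n
    unfolding z_def using mt1[of n] tp[of n] by auto
  have t0: "t \<longlonglongrightarrow> 0" unfolding t_def by (rule div_pow2_lim)
  have "(\<lambda>n. y - z n) \<longlonglongrightarrow> 0"
  proof (rule tendsto_sandwich[OF _ _ tendsto_const t0])
    show "\<forall>\<^sub>F n in sequentially. 0 \<le> y - z n" using zin by auto
    show "\<forall>\<^sub>F n in sequentially. y - z n \<le> t n"
    proof (intro always_eventually allI)
      fix n show "y - z n \<le> t n" using mt2[of n] unfolding z_def by linarith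
    qed
  qed
  then have "(\<lambda>n. y - (y - z n)) \<longlonglongrightarrow> y - 0" by (intro tendsto_diff tendsto_const)
  then have zl: "z \<longlonglongrightarrow> y" by simp
  have Kl: "(\<lambda>n. K (z n)) \<longlonglongrightarrow> K y"
    by (rule continuous_on_tendsto_compose[OF cont zl]) (use xy zin in auto)
  have en: "e n + \<epsilon> \<ge> 0" for n using bnd[of x n] xy by (meson atLeastAtMost_iff abs_ge_zero order_trans order_refl)
  have main: "\<bar>K (z n) - K x - (z n - x)*g\<bar> \<le> (y-x)*(e n + \<epsilon>)" for n
  proof -
    let ?f = "\<lambda>j::nat. K (x + real j * t n)"
    have tel: "K (z n) - K x - (z n - x)*g = (\<Sum>j<m n. (?f (Suc j) - ?f j - t n * g))"
    proof -
      have tel0: "(\<Sum>j<m n. (?f (Suc j) - ?f j)) = ?f (m n) - ?f 0" by (rule sum_lessThan_telescope)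
      have "(\<Sum>j<m n. (?f (Suc j) - ?f j - t n * g)) = (\<Sum>j<m n. (?f (Suc j) - ?f j)) - (\<Sum>j<m n. t n * g)"
        by (rule sum_subtractf)
      then show ?thesis unfolding tel0 z_def by simp
    qed
    have term_b: "\<bar>?f (Suc j) - ?f j - t n * g\<bar> \<le> t n * (e n + \<epsilon>)" if "j < m n" for j
    proof -
      define u where "u = x + real j * t n"
      have "real j * t n \<le> real (m n) * t n" using that tp[of n] by (intro mult_right_mono) auto
      moreover have "0 \<le> real j * t n" using tp[of n] by simp
      ultimately have uin: "u \<in> {x..y}" unfolding u_def using mt1[of n] by auto
      have eqf: "?f (Suc j) - ?f j - t n * g = t n * ((K (u + t n) - K u)/t n - g)"
        unfolding u_def using tp[of n] by (simp add: field_simps)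
      have "\<bar>(K (u + t n) - K u)/t n - g\<bar> \<le> e n + \<epsilon>" using bnd[OF uin, of n] unfolding t_def .
      then show ?thesis unfolding eqf abs_mult using tp[of n] by (simp add: mult_left_mono)
    qed
    have "\<bar>K (z n) - K x - (z n - x)*g\<bar> \<le> (\<Sum>j<m n. t n * (e n + \<epsilon>))"
      unfolding tel by (rule order_trans[OF sum_abs sum_mono]) (use term_b in auto)
    also have "\<dots> = (z n - x) * (e n + \<epsilon>)" unfolding z_def by simp
    also have "\<dots> \<le> (y - x) * (e n + \<epsilon>)" using zin[of n] en[of n] by (intro mult_right_mono) auto
    finally show ?thesis .
  qed
  have l1: "(\<lambda>n. \<bar>K (z n) - K x - (z n - x)*g\<bar>) \<longlonglongrightarrow> \<bar>K y - K x - (y - x)*g\<bar>"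
    by (intro tendsto_intros Kl zl)
  have l2: "(\<lambda>n. (y-x)*(e n + \<epsilon>)) \<longlonglongrightarrow> (y-x)*(0 + \<epsilon>)"
    by (intro tendsto_intros e)
  from tendsto_le[OF _ l2 l1] main show ?thesis by simp
qed



lemma Pg_seq:
  assumes g: "g > 1" and X: "X \<longlonglongrightarrow> 0" and pos: "\<And>n. X n > 0"
  shows "(\<lambda>n. Pg g (X n)) \<longlonglongrightarrow> 0"
proof (rule LIMSEQ_I)
  fix r :: real assume r: "r > 0"
  from Pg_small[OF g r] obtain d where d: "d > 0" "d \<le> 1" "\<And>h. 0 < h \<and> h < d \<longrightarrow> Pg g h < r" by blast
  from LIMSEQ_D[OF X d(1)] obtain no where no: "\<forall>n\<ge>no. norm (X n - 0) < d" by blast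
  show "\<exists>no. \<forall>n\<ge>no. norm (Pg g (X n) - 0) < r"
  proof (intro exI allI impI)
    fix n assume "n \<ge> no"
    with no pos[of n] have h: "0 < X n" "X n < d" by auto
    with d have "Pg g (X n) < r" "Pg g (X n) \<ge> 0" by (auto intro!: Pg_nonneg[OF g])
    then show "norm (Pg g (X n) - 0) < r" by simp
  qed
qed

lemma half:
  fixes K :: "real \<Rightarrow> real"
  assumes ab: "a < b" "b - a < 1" and g: "g > 1" and cont: "continuous_on {a..b} K"
    and C0: "C0 > 0"
    and H: "\<And>\<xi> \<tau>. 0 \<le> \<tau> \<Longrightarrow> \<tau> \<le> (b-a)/2 \<Longrightarrow> \<xi>-\<tau> \<in> {a..b} \<Longrightarrow> \<xi>+\<tau> \<in> {a..b} \<Longrightarrow>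
        \<bar>K (\<xi>+\<tau>) + K (\<xi>-\<tau>) - 2 * K \<xi>\<bar> \<le> C0 * \<tau> * Zg g \<tau>"
    and z: "a \<le> z" "z < b - (b-a)/4"
  shows "\<exists>D. (K has_real_derivative D) (at z within {a..b})"
proof -
  define \<delta> where "\<delta> = (b-a)/4"
  define c where "c = b - \<delta>"
  have dp: "\<delta> > 0" "\<delta> < 1" using ab unfolding \<delta>_def by auto
  define s where "s x n = (K (x + \<delta>/2^n) - K x)/(\<delta>/2^n)" for x n
  define E where "E n = C0/2 * Pg g (\<delta>/2^n)" for n
  have hpos: "\<delta>/2^n > 0" "\<delta>/2^n < 1" "\<delta>/2^n \<le> \<delta>" for n
  proof -
    show "\<delta>/2^n > 0" using dp by simp
    have "\<delta>/2^n \<le> \<delta>/1" using dp by (intro divide_left_mono) auto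
    then show "\<delta>/2^n \<le> \<delta>" by simp
    then show "\<delta>/2^n < 1" using dp by linarith
  qed
  have E0: "E \<longlonglongrightarrow> 0"
  proof -
    have "(\<lambda>n. \<delta>/2^n) \<longlonglongrightarrow> 0" by (rule div_pow2_lim)
    from Pg_seq[OF g this hpos(1)] have "(\<lambda>n. C0/2 * Pg g (\<delta>/2^n)) \<longlonglongrightarrow> C0/2 * 0"
      by (intro tendsto_intros)
    then show ?thesis unfolding E_def by simp
  qed
  have B1: "\<bar>s x m - s x n\<bar> \<le> E n" if x: "x \<in> {a..c}" and mn: "m \<ge> n" for x m n
  proof -
    define h where "h = \<delta>/2^n"
    have hp: "h > 0" "h < 1" unfolding h_def using hpos by auto
    have xin: "x \<in> {a..b}" "x + h \<in> {a..b}" using x hp hpos(3)[of n] unfolding c_def h_def by auto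
    have hm: "h / 2^(m-n) = \<delta>/2^m" unfolding h_def using mn
      by (simp add: power_add[symmetric])
    have "\<bar>(K (x + h/2^(m-n)) - K x)/(h/2^(m-n)) - (K (x+h) - K x)/h\<bar>
           \<le> C0/2 * (\<Sum>k<m-n. Zg g (\<bar>h\<bar>/2^Suc k))"
      by (rule tele[OF H xin]) (use hp in auto)
    also have "\<dots> \<le> C0/2 * Pg g h"
      using Pg_partial[OF g hp(1) hp(2)] hp C0 by (intro mult_left_mono) auto
    finally have X: "\<bar>(K (x + h/2^(m-n)) - K x)/(h/2^(m-n)) - (K (x+h) - K x)/h\<bar> \<le> C0/2 * Pg g h" .
    have hm': "\<delta>/2^n/2^(m-n) = \<delta>/2^m" using hm unfolding h_def .
    from X show ?thesis unfolding h_def hm' s_def E_def .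
  qed
  have conv: "convergent (s x)" if x: "x \<in> {a..c}" for x
  proof -
    have "Cauchy (s x)"
    proof (rule metric_CauchyI)
      fix e :: real assume e: "e > 0"
      from LIMSEQ_D[OF E0, of "e/2"] e obtain M where M: "\<forall>n\<ge>M. norm (E n - 0) < e/2" by auto
      show "\<exists>M. \<forall>m\<ge>M. \<forall>n\<ge>M. dist (s x m) (s x n) < e"
      proof (intro exI allI impI)
        fix m n assume "m \<ge> M" "n \<ge> M"
        with B1[OF x] have "\<bar>s x m - s x M\<bar> \<le> E M" "\<bar>s x n - s x M\<bar> \<le> E M" by auto
        moreover have "E M < e/2" using M by auto
        ultimately show "dist (s x m) (s x n) < e" by (simp add: dist_real_def)
      qed
    qed
    then show ?thesis by (rule real_Cauchy_convergent)
  qed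
  define G where "G x = lim (s x)" for x
  have sG: "s x \<longlonglongrightarrow> G x" if "x \<in> {a..c}" for x
    using conv[OF that] unfolding G_def by (simp add: convergent_LIMSEQ_iff)
  have B2: "\<bar>G x - s x n\<bar> \<le> E n" if x: "x \<in> {a..c}" for x n
  proof (rule LIMSEQ_le_const2)
    show "(\<lambda>m. \<bar>s x m - s x n\<bar>) \<longlonglongrightarrow> \<bar>G x - s x n\<bar>" by (intro tendsto_intros sG x)
    show "\<exists>N. \<forall>m\<ge>N. \<bar>s x m - s x n\<bar> \<le> E n" using B1[OF x] by auto
  qed
  have scont: "continuous_on {a..c} (\<lambda>x. s x n)" for n
  proof -
    have "continuous_on {a..c} (\<lambda>x. K (x + \<delta>/2^n))"
      by (rule continuous_on_compose2[OF cont]) (use hpos[of n] in \<open>auto intro!: continuous_intros simp: c_def\<close>)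
    moreover have "continuous_on {a..c} K"
      by (rule continuous_on_subset[OF cont]) (use dp in \<open>auto simp: c_def\<close>)
    ultimately show ?thesis unfolding s_def using dp by (intro continuous_intros) auto
  qed
  have Gcont: "continuous_on {a..c} G"
    unfolding continuous_on_iff
  proof (intro ballI allI impI)
    fix x e assume x: "x \<in> {a..c}" and e: "(e::real) > 0"
    from LIMSEQ_D[OF E0, of "e/3"] e obtain n where n: "norm (E n - 0) < e/3" by auto
    have e3: "e/3 > 0" using e by simp
    obtain d where
      d: "d > 0" "\<forall>x'\<in>{a..c}. dist x' x < d \<longrightarrow> dist (s x' n) (s x n) < e/3"
      using scont[of n, unfolded continuous_on_iff, rule_format, OF x e3] by blast
    show "\<exists>d>0. \<forall>x'\<in>{a..c}. dist x' x < d \<longrightarrow> dist (G x') (G x) < e"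
    proof (intro exI[of _ d] conjI ballI impI)
      fix x' assume x': "x' \<in> {a..c}" "dist x' x < d"
      have b1: "\<bar>G x' - s x' n\<bar> \<le> E n" by (rule B2[OF x'(1)])
      have b2: "\<bar>G x - s x n\<bar> \<le> E n" by (rule B2[OF x])
      have b3: "\<bar>s x' n - s x n\<bar> < e/3" using d(2) x' by (simp add: dist_real_def)
      have b4: "E n < e/3" using n by simp
      from b1 b2 b3 b4 show "dist (G x') (G x) < e" unfolding dist_real_def by arith
    qed (rule d(1))
  qed
  have Gu: "uniformly_continuous_on {a..c} G"
    by (rule compact_uniformly_continuous[OF Gcont compact_Icc])
  have zc: "z \<in> {a..c}" "z < c" using z unfolding c_def \<delta>_def by auto
  have "(K has_real_derivative G z) (at z within {a..b})"
    unfolding has_field_derivative_iff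
  proof (rule Lim_withinI)
    fix e :: real assume e: "e > 0"
    from Gu[unfolded uniformly_continuous_on_def, rule_format, of "e/2"] e
    obtain d0 where d0: "d0 > 0" "\<forall>x\<in>{a..c}. \<forall>x'\<in>{a..c}. dist x' x < d0 \<longrightarrow> dist (G x') (G x) < e/2"
      by auto
    show "\<exists>d>0. \<forall>y\<in>{a..b}. 0 < dist y z \<and> dist y z < d \<longrightarrow> dist ((K y - K z) / (y - z)) (G z) \<le> e"
    proof (intro exI[of _ "min d0 (c - z)"] conjI ballI impI)
      show "min d0 (c - z) > 0" using d0 zc by auto
      fix y assume y: "y \<in> {a..b}" "0 < dist y z \<and> dist y z < min d0 (c - z)"
      have yc: "y \<in> {a..c}" using y zc by (auto simp: dist_real_def)
      have yz: "y \<noteq> z" using y by auto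
      have Gclose: "\<bar>G u - G z\<bar> < e/2" if "u \<in> {a..c}" "\<bar>u - z\<bar> \<le> \<bar>y - z\<bar>" for u
        using d0(2) zc(1) that y by (auto simp: dist_real_def)
      have bnd: "\<bar>s u n - G z\<bar> \<le> E n + e/2" if "u \<in> {a..c}" "\<bar>u - z\<bar> \<le> \<bar>y - z\<bar>" for u n
        using B2[OF that(1), of n] Gclose[OF that] by linarith
      have quot: "dist ((K y - K z) / (y - z)) (G z) = \<bar>K y - K z - (y-z)*G z\<bar> / \<bar>y - z\<bar>"
      proof -
        have "(K y - K z) / (y - z) - G z = (K y - K z - (y-z)*G z) / (y - z)"
          using yz by (simp add: field_simps)
        then show ?thesis by (simp add: dist_real_def abs_divide)
      qed
      have main: "\<bar>K y - K z - (y-z)*G z\<bar> \<le> \<bar>y - z\<bar> * (e/2)"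
      proof (cases "z < y")
        case True
        have "\<bar>K y - K z - (y-z)*G z\<bar> \<le> (y-z)*(e/2)"
        proof (rule riemann[OF _ _ dp(1) E0])
          show "continuous_on {z..y} K" by (rule continuous_on_subset[OF cont]) (use zc y dp in \<open>auto simp: c_def\<close>)
          show "z \<le> y" using True by simp
          fix n u assume u: "u \<in> {z..y}"
          then have "u \<in> {a..c}" "\<bar>u - z\<bar> \<le> \<bar>y - z\<bar>" using zc yc by auto
          from bnd[OF this, of n] show "\<bar>(K (u + \<delta>/2^n) - K u)/(\<delta>/2^n) - G z\<bar> \<le> E n + e/2"
            unfolding s_def .
        qed
        then show ?thesis using True by simp
      next
        case False
        then have yz': "y < z" using yz by simp
        have "\<bar>K z - K y - (z-y)*G z\<bar> \<le> (z-y)*(e/2)"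
        proof (rule riemann[OF _ _ dp(1) E0])
          show "continuous_on {y..z} K" by (rule continuous_on_subset[OF cont]) (use zc y dp in \<open>auto simp: c_def\<close>)
          show "y \<le> z" using yz' by simp
          fix n u assume u: "u \<in> {y..z}"
          then have "u \<in> {a..c}" "\<bar>u - z\<bar> \<le> \<bar>y - z\<bar>" using zc yc by auto
          from bnd[OF this, of n] show "\<bar>(K (u + \<delta>/2^n) - K u)/(\<delta>/2^n) - G z\<bar> \<le> E n + e/2"
            unfolding s_def .
        qed
        moreover have "\<bar>K z - K y - (z-y)*G z\<bar> = \<bar>K y - K z - (y-z)*G z\<bar>" by (simp add: algebra_simps)
        ultimately show ?thesis using yz' by simp
      qed
      have "\<bar>K y - K z - (y-z)*G z\<bar> / \<bar>y - z\<bar> \<le> e/2"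
        using main yz by (simp add: divide_le_eq mult.commute)
      then show "dist ((K y - K z) / (y - z)) (G z) \<le> e" unfolding quot using e by linarith
    qed
  qed
  then show ?thesis by blast
qed



lemma between:
  fixes x h :: real
  assumes "x \<in> {a..b}" "x + h \<in> {a..b}"
  shows "x + h/2^n \<in> {a..b}"
proof (cases "h \<ge> 0")
  case True
  have "h/2^n \<le> h/1" using True by (intro divide_left_mono) auto
  moreover have "h/2^n \<ge> 0" using True by simp
  ultimately show ?thesis using assms by auto
next
  case False
  have "(-h)/2^n \<le> (-h)/1" using False by (intro divide_left_mono) auto
  moreover have "h/2^n \<le> 0" using False by (simp add: divide_nonpos_pos)
  ultimately show ?thesis using assms by auto
qed

lemma deriv_quot_bound:
  fixes K :: "real \<Rightarrow> real"
  assumes ab: "b - a < 1" and g: "g > 1" and C0: "C0 > 0"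
    and H: "\<And>\<xi> \<tau>. 0 \<le> \<tau> \<Longrightarrow> \<tau> \<le> (b-a)/2 \<Longrightarrow> \<xi>-\<tau> \<in> {a..b} \<Longrightarrow> \<xi>+\<tau> \<in> {a..b} \<Longrightarrow>
        \<bar>K (\<xi>+\<tau>) + K (\<xi>-\<tau>) - 2 * K \<xi>\<bar> \<le> C0 * \<tau> * Zg g \<tau>"
    and D: "(K has_real_derivative D) (at x within {a..b})"
    and x: "x \<in> {a..b}" "x + h \<in> {a..b}" and h: "h \<noteq> 0"
  shows "\<bar>D - (K (x+h) - K x)/h\<bar> \<le> C0/2 * Pg g \<bar>h\<bar>"
proof -
  define q where "q n = (K (x + h/2^n) - K x)/(h/2^n)" for n
  have hp: "0 < \<bar>h\<bar>" "\<bar>h\<bar> < 1" using h x ab by auto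
  have ql: "q \<longlonglongrightarrow> D"
  proof (rule LIMSEQ_I)
    fix r :: real assume r: "r > 0"
    from D[unfolded has_field_derivative_iff Lim_within] r obtain d where
      d: "d > 0" "\<forall>y\<in>{a..b}. 0 < dist y x \<and> dist y x < d \<longrightarrow> dist ((K y - K x)/(y - x)) D < r"
      by blast
    have "(\<lambda>n. h/2^n) \<longlonglongrightarrow> 0" by (rule div_pow2_lim)
    from LIMSEQ_D[OF this d(1)] obtain no where no: "\<forall>n\<ge>no. norm (h/2^n - 0) < d" by blast
    show "\<exists>no. \<forall>n\<ge>no. norm (q n - D) < r"
    proof (intro exI allI impI)
      fix n assume "n \<ge> no"
      then have "\<bar>h/2^n\<bar> < d" using no by auto
      moreover have "h/2^n \<noteq> 0" using h by simp
      ultimately have "dist ((K (x + h/2^n) - K x)/((x + h/2^n) - x)) D < r"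
        by (intro d(2)[rule_format] between[OF x]) (auto simp: dist_real_def)
      moreover have yx: "x + h/2^n - x = h/2^n" by simp
      ultimately show "norm (q n - D) < r" unfolding q_def yx by (simp only: dist_real_def real_norm_def)
    qed
  qed
  show ?thesis
  proof (rule LIMSEQ_le_const2)
    show "(\<lambda>n. \<bar>q n - (K (x+h) - K x)/h\<bar>) \<longlonglongrightarrow> \<bar>D - (K (x+h) - K x)/h\<bar>"
      by (intro tendsto_intros ql)
    show "\<exists>N. \<forall>n\<ge>N. \<bar>q n - (K (x+h) - K x)/h\<bar> \<le> C0/2 * Pg g \<bar>h\<bar>"
    proof (intro exI allI impI)
      fix n :: nat
      have "\<bar>q n - (K (x+h) - K x)/h\<bar> \<le> C0/2 * (\<Sum>k<n. Zg g (\<bar>h\<bar>/2^Suc k))"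
        unfolding q_def by (rule tele[OF H x h])
      also have "\<dots> \<le> C0/2 * Pg g \<bar>h\<bar>"
        using Pg_partial[OF g hp] C0 by (intro mult_left_mono) auto
      finally show "\<bar>q n - (K (x+h) - K x)/h\<bar> \<le> C0/2 * Pg g \<bar>h\<bar>" .
    qed
  qed
qed

theorem theorem2p3:
  fixes a b \<gamma> :: real and K :: "real \<Rightarrow> real"
  assumes "a < b" and "b - a < 1" and "\<gamma> > 1"
    and "continuous_on {a..b} K"
    and "\<exists>C0>0. \<forall>\<xi> \<tau>. 0 \<le> \<tau> \<and> \<tau> \<le> (b - a) / 2 \<and> \<xi> - \<tau> \<in> {a..b} \<and> \<xi> + \<tau> \<in> {a..b} \<longrightarrow>
           \<bar>K (\<xi> + \<tau>) + K (\<xi> - \<tau>) - 2 * K \<xi>\<bar> \<le> C0 * \<tau> * Zg \<gamma> \<tau>"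
  shows "\<exists>K'. continuous_on {a..b} K' \<and>
           (\<forall>x\<in>{a..b}. (K has_real_derivative K' x) (at x within {a..b})) \<and>
           (\<exists>C>0. \<forall>\<xi>\<in>{a..b}. \<forall>\<eta>\<in>{a..b}. \<bar>K' \<xi> - K' \<eta>\<bar> \<le> C * Pg \<gamma> \<bar>\<xi> - \<eta>\<bar>)"
proof -
  note ab = assms(1,2) and g = assms(3) and cont = assms(4)
  from assms(5) obtain C0 where C0: "C0 > 0" and H0: "\<forall>\<xi> \<tau>. 0 \<le> \<tau> \<and> \<tau> \<le> (b - a) / 2 \<and> \<xi> - \<tau> \<in> {a..b} \<and> \<xi> + \<tau> \<in> {a..b} \<longrightarrow>
           \<bar>K (\<xi> + \<tau>) + K (\<xi> - \<tau>) - 2 * K \<xi>\<bar> \<le> C0 * \<tau> * Zg \<gamma> \<tau>" by blast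
  have H: "\<And>\<xi> \<tau>. 0 \<le> \<tau> \<Longrightarrow> \<tau> \<le> (b-a)/2 \<Longrightarrow> \<xi>-\<tau> \<in> {a..b} \<Longrightarrow> \<xi>+\<tau> \<in> {a..b} \<Longrightarrow>
        \<bar>K (\<xi>+\<tau>) + K (\<xi>-\<tau>) - 2 * K \<xi>\<bar> \<le> C0 * \<tau> * Zg \<gamma> \<tau>" using H0 by blast
  define KR where "KR y = K (- y)" for y
  have contR: "continuous_on {-b..-a} KR"
    unfolding KR_def by (rule continuous_on_compose2[OF cont]) (auto intro!: continuous_intros)
  have HR: "\<bar>KR (\<xi>+\<tau>) + KR (\<xi>-\<tau>) - 2 * KR \<xi>\<bar> \<le> C0 * \<tau> * Zg \<gamma> \<tau>"
    if "0 \<le> \<tau>" "\<tau> \<le> ((-a)-(-b))/2" "\<xi>-\<tau> \<in> {-b..-a}" "\<xi>+\<tau> \<in> {-b..-a}" for \<xi> \<tau>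
  proof -
    have "\<bar>K (-\<xi>+\<tau>) + K (-\<xi>-\<tau>) - 2 * K (-\<xi>)\<bar> \<le> C0 * \<tau> * Zg \<gamma> \<tau>"
      by (rule H) (use that in auto)
    moreover have "KR (\<xi>+\<tau>) = K (-\<xi>-\<tau>)" "KR (\<xi>-\<tau>) = K (-\<xi>+\<tau>)" "KR \<xi> = K (-\<xi>)"
      unfolding KR_def by (rule arg_cong[of _ _ K]; simp)+
    ultimately show ?thesis by (simp add: add.commute)
  qed
  have ex: "\<exists>D. (K has_real_derivative D) (at x within {a..b})" if x: "x \<in> {a..b}" for x
  proof (cases "x < b - (b-a)/4")
    case True
    show ?thesis by (rule half[OF ab g cont C0 H]) (use x True in auto)
  next
    case False
    have "\<exists>D. (KR has_real_derivative D) (at (-x) within {-b..-a})"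
      by (rule half[OF _ _ g contR C0 HR]) (use x False ab in \<open>auto simp: field_simps\<close>)
    then obtain D where D: "(KR has_real_derivative D) (at (-x) within {-b..-a})" by blast
    have img: "uminus ` {a..b} = {-b..-a::real}" by simp
    have "(KR \<circ> uminus has_real_derivative D * (-1)) (at x within {a..b})"
      by (rule DERIV_image_chain) (use D img in \<open>auto intro!: derivative_eq_intros\<close>)
    moreover have "KR \<circ> uminus = K" unfolding KR_def by (auto simp: fun_eq_iff)
    ultimately show ?thesis by auto
  qed
  define K' where "K' x = (SOME D. (K has_real_derivative D) (at x within {a..b}))" for x
  have Kd: "(K has_real_derivative K' x) (at x within {a..b})" if "x \<in> {a..b}" for x
    unfolding K'_def by (rule someI_ex[OF ex[OF that]])
  have modb: "\<bar>K' \<xi> - K' \<eta>\<bar> \<le> C0 * Pg \<gamma> \<bar>\<xi> - \<eta>\<bar>" if xi: "\<xi> \<in> {a..b}" and eta: "\<eta> \<in> {a..b}" for \<xi> \<eta>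
  proof (cases "\<xi> = \<eta>")
    case True then show ?thesis by (simp add: Pg_def)
  next
    case False
    define h where "h = \<eta> - \<xi>"
    have h0: "h \<noteq> 0" using False unfolding h_def by simp
    have xh: "\<xi> + h \<in> {a..b}" "\<eta> + (-h) \<in> {a..b}" using xi eta unfolding h_def by simp_all
    have b1: "\<bar>K' \<xi> - (K (\<xi>+h) - K \<xi>)/h\<bar> \<le> C0/2 * Pg \<gamma> \<bar>h\<bar>"
      by (rule deriv_quot_bound[OF ab(2) g C0 H Kd[OF xi] xi xh(1) h0])
    have b2: "\<bar>K' \<eta> - (K (\<eta>+(-h)) - K \<eta>)/(-h)\<bar> \<le> C0/2 * Pg \<gamma> \<bar>-h\<bar>"
      by (rule deriv_quot_bound[OF ab(2) g C0 H Kd[OF eta] eta xh(2)]) (use h0 in auto)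
    have same: "(K (\<eta>+(-h)) - K \<eta>)/(-h) = (K (\<xi>+h) - K \<xi>)/h"
      unfolding h_def by simp (metis minus_diff_eq minus_divide_divide)
    have habs: "\<bar>h\<bar> = \<bar>\<xi> - \<eta>\<bar>" unfolding h_def by simp
    have b2': "\<bar>K' \<eta> - (K (\<xi>+h) - K \<xi>)/h\<bar> \<le> C0/2 * Pg \<gamma> \<bar>h\<bar>"
      using b2 unfolding same by simp
    from b1 b2' show ?thesis unfolding habs by arith
  qed
  have Kc: "continuous_on {a..b} K'"
    unfolding continuous_on_iff
  proof (intro ballI allI impI)
    fix x e assume x: "x \<in> {a..b}" and e: "(e::real) > 0"
    from Pg_small[OF g, of "e/C0"] e C0 obtain d where
      d: "d > 0" "\<And>h. 0 < h \<and> h < d \<longrightarrow> Pg \<gamma> h < e/C0" by auto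
    show "\<exists>d>0. \<forall>x'\<in>{a..b}. dist x' x < d \<longrightarrow> dist (K' x') (K' x) < e"
    proof (intro exI[of _ d] conjI ballI impI)
      fix x' assume x': "x' \<in> {a..b}" "dist x' x < d"
      show "dist (K' x') (K' x) < e"
      proof (cases "x' = x")
        case True then show ?thesis using e by simp
      next
        case False
        then have "Pg \<gamma> \<bar>x' - x\<bar> < e/C0" using d(2) x' by (auto simp: dist_real_def)
        then have "C0 * Pg \<gamma> \<bar>x' - x\<bar> < e" using C0 by (simp add: field_simps)
        with modb[OF x'(1) x] show ?thesis by (simp add: dist_real_def)
      qed
    qed (use d in auto)
  qed
  show ?thesis
    by (intro exI[of _ K'] conjI Kc ballI Kd exI[of _ C0]) (use C0 modb in auto)
qed

end
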